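(* Let $A$ be a locally-complex Cayley--Dickson algebra and let $f(x)=x^n+a_{n-1}x^{n-1}+\dots+a_0\in A[x]$ be monic with $n\ge1$. Then $\mathrm{sn}(f)$ is a compact subset of $A$, and it is contained in the open ball centered at $0$ of radius $R_1(f)$, in the open ball centered at $0$ of radius $R_2(f)$, and in the closed ball centered at $0$ of radius $R_3(f)$, where $R_1(f)=\sqrt{1+\sum_{k=0}^{n-1}|a_k|^2}$, $R_2(f)=1+\max_{0\le k\le n-1}|a_k|$, $R_3(f)=\max\{1,\sum_{k=0}^{n-1}|a_k|\}$.
   Context: Real Cayley--Dickson algebras: $A_0=\mathbb{R}$ with identity involution, $A_{k+1}=A_k\{\gamma_k\}=A_k\times A_k$ with product $(a,b)(c,d)=(ac+\gamma_k\bar d b,\ da+b\bar c)$ and involution $\overline{(a,b)}=(\bar a,-b)$. A real unital algebra is locally-complex if every non-real element generates a subalgebra isomorphic to $\mathbb{C}$ (for Cayley--Dickson algebras: all $\gamma_k=-1$ up to isomorphism). Trace $\mathrm{tr}(\lambda)=\lambda+\bar\lambda$, norm $\mathrm{n}(\lambda)=\bar\lambda\lambda$, $|\lambda|=\sqrt{\mathrm{n}(\lambda)}$ (Euclidean norm; $A$ carries the Euclidean topology). For $I$ with trace $0$ and norm $1$, $\mathbb{C}_I=\mathbb{R}+\mathbb{R}I\cong\mathbb{C}$ and $\pi_I$ the orthogonal projection onto it. $A[x]=A\otimes_{\mathbb{R}}\mathbb{R}[x]$ with central $x$; for $f(x)=\sum_k a_kx^k$, $f_I(x)=\sum_k\pi_I(a_k)x^k$.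 If $f_I$ is non-constant, $K_{\mathbb{C}_I}(f_I)$ is the convex hull in $\mathbb{C}_I$ of the roots of $f_I$ in $\mathbb{C}_I$; otherwise $K_{\mathbb{C}_I}(f_I)=\mathbb{C}_I$. The Gauss--Lucas snail is $\mathrm{sn}(f)=\bigcup_I K_{\mathbb{C}_I}(f_I)$ over all $I$ with $\mathrm{tr}(I)=0$, $\mathrm{n}(I)=1$. *)

theory Defs
  imports "HOL-Analysis.Analysis"
begin

text \<open>Real Cayley--Dickson algebra A_k with all gamma_j = -1 (the locally-complex ones).
  Elements of A_k are represented as functions nat => real vanishing at all indices >= 2^k;
  the pair (a,b) in A_k x A_k is the vector whose first 2^k coordinates are a and next 2^k are b.\<close>

definition cd_carrier :: "nat \<Rightarrow> (nat \<Rightarrow> real) set" where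
  "cd_carrier k = {a. \<forall>i\<ge>2^k. a i = 0}"

definition cd_lo :: "nat \<Rightarrow> (nat \<Rightarrow> real) \<Rightarrow> (nat \<Rightarrow> real)" where
  "cd_lo k x = (\<lambda>i. if i < 2^k then x i else 0)"

definition cd_hi :: "nat \<Rightarrow> (nat \<Rightarrow> real) \<Rightarrow> (nat \<Rightarrow> real)" where
  "cd_hi k x = (\<lambda>i. if i < 2^k then x (i + 2^k) else 0)"

definition cd_join :: "nat \<Rightarrow> (nat \<Rightarrow> real) \<Rightarrow> (nat \<Rightarrow> real) \<Rightarrow> (nat \<Rightarrow> real)" where
  "cd_join k p q = (\<lambda>i. if i < 2^k then p i else if i < 2 * 2^k then q (i - 2^k) else 0)"

definition cd_add :: "(nat \<Rightarrow> real) \<Rightarrow> (nat \<Rightarrow> real) \<Rightarrow> (nat \<Rightarrow> real)" where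
  "cd_add a b = (\<lambda>i. a i + b i)"

definition cd_neg :: "(nat \<Rightarrow> real) \<Rightarrow> (nat \<Rightarrow> real)" where
  "cd_neg a = (\<lambda>i. - a i)"

definition cd_scale :: "real \<Rightarrow> (nat \<Rightarrow> real) \<Rightarrow> (nat \<Rightarrow> real)" where
  "cd_scale c a = (\<lambda>i. c * a i)"

definition cd_real :: "real \<Rightarrow> (nat \<Rightarrow> real)" where
  "cd_real r = (\<lambda>i. if i = 0 then r else 0)"

fun cd_conj :: "nat \<Rightarrow> (nat \<Rightarrow> real) \<Rightarrow> (nat \<Rightarrow> real)" where
  "cd_conj 0 a = cd_real (a 0)"
| "cd_conj (Suc k) a = cd_join k (cd_conj k (cd_lo k a)) (cd_neg (cd_hi k a))"

text \<open>Product: (a,b)(c,d) = (ac + gamma conj(d) b, da + b conj(c)) with gamma = -1.\<close>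
fun cd_mul :: "nat \<Rightarrow> (nat \<Rightarrow> real) \<Rightarrow> (nat \<Rightarrow> real) \<Rightarrow> (nat \<Rightarrow> real)" where
  "cd_mul 0 x y = cd_real (x 0 * y 0)"
| "cd_mul (Suc k) x y =
     (let a = cd_lo k x; b = cd_hi k x; c = cd_lo k y; d = cd_hi k y in
      cd_join k
        (cd_add (cd_mul k a c) (cd_scale (-1) (cd_mul k (cd_conj k d) b)))
        (cd_add (cd_mul k d a) (cd_mul k b (cd_conj k c))))"

fun cd_pow :: "nat \<Rightarrow> (nat \<Rightarrow> real) \<Rightarrow> nat \<Rightarrow> (nat \<Rightarrow> real)" where
  "cd_pow k z 0 = cd_real 1"
| "cd_pow k z (Suc j) = cd_mul k z (cd_pow k z j)"

text \<open>Trace and norm (as elements of A_k), and the modulus |lambda| = sqrt(n(lambda)).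
  n(lambda) = conj(lambda) lambda is a real element, so it equals its 0-th coordinate.\<close>
definition cd_tr :: "nat \<Rightarrow> (nat \<Rightarrow> real) \<Rightarrow> (nat \<Rightarrow> real)" where
  "cd_tr k a = cd_add a (cd_conj k a)"

definition cd_n :: "nat \<Rightarrow> (nat \<Rightarrow> real) \<Rightarrow> (nat \<Rightarrow> real)" where
  "cd_n k a = cd_mul k (cd_conj k a) a"

definition cd_abs :: "nat \<Rightarrow> (nat \<Rightarrow> real) \<Rightarrow> real" where
  "cd_abs k a = sqrt (cd_n k a 0)"

definition cd_units :: "nat \<Rightarrow> (nat \<Rightarrow> real) set" where
  "cd_units k = {I \<in> cd_carrier k. cd_tr k I = cd_real 0 \<and> cd_n k I = cd_real 1}"

definition cd_inner :: "nat \<Rightarrow> (nat \<Rightarrow> real) \<Rightarrow> (nat \<Rightarrow> real) \<Rightarrow> real" where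
  "cd_inner k a b = (\<Sum>i<2^k. a i * b i)"

definition cd_CI :: "nat \<Rightarrow> (nat \<Rightarrow> real) \<Rightarrow> (nat \<Rightarrow> real) set" where
  "cd_CI k I = {cd_add (cd_real x) (cd_scale y I) | x y. True}"

definition cd_proj :: "nat \<Rightarrow> (nat \<Rightarrow> real) \<Rightarrow> (nat \<Rightarrow> real) \<Rightarrow> (nat \<Rightarrow> real)" where
  "cd_proj k I a = cd_add (cd_scale (cd_inner k a (cd_real 1)) (cd_real 1))
                          (cd_scale (cd_inner k a I) I)"

text \<open>Evaluation of a polynomial sum_(j<=n) c_j x^j (x central) at z.\<close>
definition cd_poly_eval :: "nat \<Rightarrow> (nat \<Rightarrow> (nat \<Rightarrow> real)) \<Rightarrow> nat \<Rightarrow> (nat \<Rightarrow> real) \<Rightarrow> (nat \<Rightarrow> real)" where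
  "cd_poly_eval k c n z = (\<lambda>i. \<Sum>j\<le>n. cd_mul k (c j) (cd_pow k z j) i)"

definition monic_coeffs :: "(nat \<Rightarrow> (nat \<Rightarrow> real)) \<Rightarrow> nat \<Rightarrow> nat \<Rightarrow> (nat \<Rightarrow> real)" where
  "monic_coeffs a n j = (if j < n then a j else if j = n then cd_real 1 else (\<lambda>_. 0))"

definition cd_convex_hull :: "(nat \<Rightarrow> real) set \<Rightarrow> (nat \<Rightarrow> real) set" where
  "cd_convex_hull S = {(\<lambda>i. \<Sum>s\<in>F. t s * s i) | F t. finite F \<and> F \<subseteq> S \<and> F \<noteq> {} \<and>
       (\<forall>s\<in>F. 0 \<le> t s) \<and> (\<Sum>s\<in>F. t s) = 1}"

definition K_CI :: "nat \<Rightarrow> (nat \<Rightarrow> real) \<Rightarrow> (nat \<Rightarrow> (nat \<Rightarrow> real)) \<Rightarrow> nat \<Rightarrow> (nat \<Rightarrow> real) set" where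
  "K_CI k I c n =
     (let cI = (\<lambda>j. cd_proj k I (c j)) in
      if (\<exists>j\<in>{1..n}. cI j \<noteq> (\<lambda>_. 0))
      then cd_convex_hull {z \<in> cd_CI k I. cd_poly_eval k cI n z = (\<lambda>_. 0)}
      else cd_CI k I)"

definition snail :: "nat \<Rightarrow> (nat \<Rightarrow> (nat \<Rightarrow> real)) \<Rightarrow> nat \<Rightarrow> (nat \<Rightarrow> real) set" where
  "snail k c n = (\<Union>I\<in>cd_units k. K_CI k I c n)"

end

theory Submission
  imports Defs
begin


lemma carrier_join[simp]: "cd_join k p q \<in> cd_carrier (Suc k)"
  by (auto simp: cd_carrier_def cd_join_def)
lemma carrier_lo[simp]: "cd_lo k x \<in> cd_carrier k"
  by (auto simp: cd_carrier_def cd_lo_def)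
lemma carrier_hi[simp]: "cd_hi k x \<in> cd_carrier k"
  by (auto simp: cd_carrier_def cd_hi_def)
lemma carrier_real[simp]: "cd_real r \<in> cd_carrier k"
  by (auto simp: cd_carrier_def cd_real_def)
lemma carrier_mul[simp]: "cd_mul k x y \<in> cd_carrier k"
  by (cases k) (auto simp: Let_def)
lemma carrier_conj[simp]: "cd_conj k x \<in> cd_carrier k"
  by (cases k) auto

lemma lo_join[simp]: "p \<in> cd_carrier k \<Longrightarrow> cd_lo k (cd_join k p q) = p"
  by (auto simp: cd_carrier_def cd_join_def cd_lo_def fun_eq_iff)
lemma hi_join[simp]: "q \<in> cd_carrier k \<Longrightarrow> cd_hi k (cd_join k p q) = q"
  by (auto simp: cd_carrier_def cd_join_def cd_hi_def fun_eq_iff)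
lemma join_lo_hi: "x \<in> cd_carrier (Suc k) \<Longrightarrow> cd_join k (cd_lo k x) (cd_hi k x) = x"
  by (auto simp: cd_carrier_def cd_join_def cd_hi_def cd_lo_def fun_eq_iff)

lemma lo_add[simp]: "cd_lo k (cd_add x y) = cd_add (cd_lo k x) (cd_lo k y)"
  by (auto simp: cd_add_def cd_lo_def fun_eq_iff)
lemma hi_add[simp]: "cd_hi k (cd_add x y) = cd_add (cd_hi k x) (cd_hi k y)"
  by (auto simp: cd_add_def cd_hi_def fun_eq_iff)
lemma lo_scale[simp]: "cd_lo k (cd_scale r x) = cd_scale r (cd_lo k x)"
  by (auto simp: cd_scale_def cd_lo_def fun_eq_iff)
lemma hi_scale[simp]: "cd_hi k (cd_scale r x) = cd_scale r (cd_hi k x)"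
  by (auto simp: cd_scale_def cd_hi_def fun_eq_iff)
lemma join_add: "cd_add (cd_join k p q) (cd_join k p' q') = cd_join k (cd_add p p') (cd_add q q')"
  by (auto simp: cd_add_def cd_join_def fun_eq_iff)
lemma join_scale: "cd_scale r (cd_join k p q) = cd_join k (cd_scale r p) (cd_scale r q)"
  by (auto simp: cd_scale_def cd_join_def fun_eq_iff)

lemma conj_add: "cd_conj k (cd_add x y) = cd_add (cd_conj k x) (cd_conj k y)"
proof (induction k arbitrary: x y)
  case 0 then show ?case by (auto simp: cd_add_def cd_real_def fun_eq_iff)
next
  case (Suc k) then show ?case
    by (simp add: join_add) (simp add: cd_add_def cd_neg_def fun_eq_iff)
qed

lemma conj_scale: "cd_conj k (cd_scale r x) = cd_scale r (cd_conj k x)"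
proof (induction k arbitrary: x)
  case 0 then show ?case by (auto simp: cd_scale_def cd_real_def fun_eq_iff)
next
  case (Suc k) then show ?case
    by (simp add: join_scale) (simp add: cd_scale_def cd_neg_def fun_eq_iff)
qed

lemma mul_add:
  "cd_mul k (cd_add x y) z = cd_add (cd_mul k x z) (cd_mul k y z)"
  "cd_mul k z (cd_add x y) = cd_add (cd_mul k z x) (cd_mul k z y)"
proof (induction k arbitrary: x y z)
  case 0 
  { case 1 then show ?case by (auto simp: cd_add_def cd_real_def fun_eq_iff algebra_simps) }
  { case 2 then show ?case by (auto simp: cd_add_def cd_real_def fun_eq_iff algebra_simps) }
next
  case (Suc k) 
  { case 1 then show ?case
    by (simp add: Let_def Suc.IH conj_add join_add) (simp add: cd_add_def cd_scale_def fun_eq_iff algebra_simps) }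
  { case 2 then show ?case
    by (simp add: Let_def Suc.IH conj_add join_add) (simp add: cd_add_def cd_scale_def fun_eq_iff algebra_simps) }
qed

lemma mul_scale:
  "cd_mul k (cd_scale r x) z = cd_scale r (cd_mul k x z)"
  "cd_mul k z (cd_scale r x) = cd_scale r (cd_mul k z x)"
proof (induction k arbitrary: x z)
  case 0 
  { case 1 then show ?case by (auto simp: cd_scale_def cd_real_def fun_eq_iff algebra_simps) }
  { case 2 then show ?case by (auto simp: cd_scale_def cd_real_def fun_eq_iff algebra_simps) }
next
  case (Suc k) 
  { case 1 then show ?case
    by (simp add: Let_def Suc.IH conj_scale join_scale) (simp add: cd_add_def cd_scale_def fun_eq_iff algebra_simps) }
  { case 2 then show ?case
    by (simp add: Let_def Suc.IH conj_scale join_scale) (simp add: cd_add_def cd_scale_def fun_eq_iff algebra_simps) }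
qed



abbreviation Z :: "nat \<Rightarrow> real" where "Z \<equiv> (\<lambda>_. 0)"

lemma add_real: "cd_add (cd_real a) (cd_real b) = cd_real (a + b)"
  by (auto simp: cd_add_def cd_real_def fun_eq_iff)

lemma scale0: "cd_scale 0 y = Z" by (simp add: cd_scale_def)
lemma mul_zero[simp]: "cd_mul k Z x = Z" "cd_mul k x Z = Z"
proof -
  show "cd_mul k Z x = Z" using mul_scale(1)[where k=k and r=0 and x=Z and z=x] by (simp only: scale0)
  show "cd_mul k x Z = Z" using mul_scale(2)[where k=k and r=0 and x=Z and z=x] by (simp only: scale0)
qed
lemma conj_zero[simp]: "cd_conj k Z = Z"
  using conj_scale[where k=k and r=0 and x=Z] by (simp only: scale0)

lemma lo_real[simp]: "cd_lo k (cd_real r) = cd_real r"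
  by (auto simp: cd_lo_def cd_real_def fun_eq_iff)
lemma hi_real[simp]: "cd_hi k (cd_real r) = Z"
  by (auto simp: cd_hi_def cd_real_def fun_eq_iff)
lemma carrier_scale[simp]: "x \<in> cd_carrier k \<Longrightarrow> cd_scale r x \<in> cd_carrier k"
  by (auto simp: cd_carrier_def cd_scale_def)
lemma carrier_neg[simp]: "x \<in> cd_carrier k \<Longrightarrow> cd_neg x \<in> cd_carrier k"
  by (auto simp: cd_carrier_def cd_neg_def)
lemma conj_real[simp]: "cd_conj k (cd_real r) = cd_real r"
proof (induction k)
  case 0 then show ?case by (simp add: cd_real_def fun_eq_iff)
next
  case (Suc k)
  have "cd_conj (Suc k) (cd_real r) = cd_join k (cd_real r) (cd_neg Z)" using Suc.IH by simp
  then show ?case by (simp add: cd_real_def cd_join_def cd_neg_def fun_eq_iff)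
qed

lemma mul_real:
  "x \<in> cd_carrier k \<Longrightarrow> cd_mul k (cd_real r) x = cd_scale r x"
  "x \<in> cd_carrier k \<Longrightarrow> cd_mul k x (cd_real r) = cd_scale r x"
proof (induction k arbitrary: x)
  case 0 
  { case 1 then show ?case by (auto simp: cd_scale_def cd_real_def cd_carrier_def fun_eq_iff) }
  { case 2 then show ?case by (auto simp: cd_scale_def cd_real_def cd_carrier_def fun_eq_iff) }
next
  case (Suc k) 
  { case 1 
    have "cd_mul (Suc k) (cd_real r) x = cd_join k (cd_scale r (cd_lo k x)) (cd_scale r (cd_hi k x))"
      by (simp add: Let_def Suc.IH) (simp add: cd_add_def cd_scale_def fun_eq_iff)
    also have "\<dots> = cd_scale r x" using join_lo_hi[OF 1] by (metis join_scale)
    finally show ?case . }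
  { case 2 
    have "cd_mul (Suc k) x (cd_real r) = cd_join k (cd_scale r (cd_lo k x)) (cd_scale r (cd_hi k x))"
      by (simp add: Let_def Suc.IH) (simp add: cd_add_def cd_scale_def fun_eq_iff)
    also have "\<dots> = cd_scale r x" using join_lo_hi[OF 2] by (metis join_scale)
    finally show ?case . }
qed

lemma conj_formula:
  "x \<in> cd_carrier k \<Longrightarrow> cd_conj k x = (\<lambda>i. if i = 0 then x 0 else - x i)"
proof (induction k arbitrary: x)
  case 0 then show ?case by (auto simp: cd_real_def cd_carrier_def fun_eq_iff)
next
  case (Suc k)
  have "cd_lo k x \<in> cd_carrier k" by simp
  from Suc.IH[OF this] Suc.prems show ?case
    by (auto simp: cd_join_def cd_lo_def cd_hi_def cd_neg_def cd_carrier_def fun_eq_iff)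
qed

lemma sum_double: "(\<Sum>i<m+m. f i) = (\<Sum>i<m. f i) + (\<Sum>i<m. f (i + m)) " for f :: "nat \<Rightarrow> real"
proof -
  have "(\<Sum>i<m+m. f i) = (\<Sum>i\<in>{0..<m}. f i) + (\<Sum>i\<in>{m..<m+m}. f i)"
    by (simp add: lessThan_atLeast0 sum.atLeastLessThan_concat)
  also have "(\<Sum>i\<in>{m..<m+m}. f i) = (\<Sum>i\<in>{0..<m}. f (i + m))"
    using sum.shift_bounds_nat_ivl[of f 0 m m] by simp
  finally show ?thesis by (simp add: lessThan_atLeast0)
qed

lemma norm_formula:
  "x \<in> cd_carrier k \<Longrightarrow> cd_n k x = cd_real (\<Sum>i<2^k. (x i)\<^sup>2)"
proof (induction k arbitrary: x)
  case 0 then show ?case by (auto simp: cd_n_def cd_real_def cd_carrier_def fun_eq_iff power2_eq_square)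
next
  case (Suc k)
  let ?a = "cd_lo k x" and ?b = "cd_hi k x"
  have nb: "cd_neg ?b = cd_scale (-1) ?b" by (simp add: cd_neg_def cd_scale_def fun_eq_iff)
  have "cd_n (Suc k) x = cd_join k (cd_add (cd_n k ?a) (cd_n k ?b)) Z"
    unfolding cd_n_def
    by (simp add: Let_def nb mul_scale conj_scale) (simp add: cd_add_def cd_scale_def fun_eq_iff)
  also have "\<dots> = cd_join k (cd_real ((\<Sum>i<2^k. (?a i)\<^sup>2) + (\<Sum>i<2^k. (?b i)\<^sup>2))) Z"
    by (simp add: Suc.IH add_real)
  also have "(\<Sum>i<2^k. (?a i)\<^sup>2) + (\<Sum>i<2^k. (?b i)\<^sup>2) = (\<Sum>i<2^Suc k. (x i)\<^sup>2)"
    using sum_double[of "\<lambda>i. (x i)\<^sup>2" "2^k"] by (simp add: cd_lo_def cd_hi_def mult_2)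
  finally show ?case by (simp add: cd_join_def cd_real_def fun_eq_iff)
qed




definition emb :: "(nat \<Rightarrow> real) \<Rightarrow> complex \<Rightarrow> (nat \<Rightarrow> real)" where
  "emb I w = cd_add (cd_real (Re w)) (cd_scale (Im w) I)"

lemma emb_apply: "emb I w i = Re w * cd_real 1 i + Im w * I i"
  by (simp add: emb_def cd_add_def cd_scale_def cd_real_def)

lemma carrier_emb[simp]: "I \<in> cd_carrier k \<Longrightarrow> emb I w \<in> cd_carrier k"
  by (auto simp: cd_carrier_def emb_apply cd_real_def)

lemma real_zero_iff: "cd_real a = cd_real b \<longleftrightarrow> a = b"
  by (auto simp: cd_real_def fun_eq_iff dest: spec[of _ 0])

locale unitI =
  fixes k :: nat and I :: "nat \<Rightarrow> real"
  assumes unit: "I \<in> cd_units k"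
begin

lemma carrier[simp]: "I \<in> cd_carrier k" using unit by (simp add: cd_units_def)

lemma I0: "I 0 = 0"
proof -
  have "cd_tr k I 0 = cd_real 0 0" using unit by (simp add: cd_units_def)
  then show ?thesis by (simp add: cd_tr_def cd_add_def conj_formula cd_real_def)
qed

lemma Isq: "(\<Sum>i<2^k. (I i)\<^sup>2) = 1"
  using unit by (simp add: cd_units_def norm_formula real_zero_iff)

lemma conjI: "cd_conj k I = cd_scale (-1) I"
  by (simp add: conj_formula I0 cd_scale_def fun_eq_iff)

lemma II: "cd_mul k I I = cd_real (-1)"
proof -
  have "cd_n k I = cd_real 1" using unit by (simp add: cd_units_def)
  then have "cd_scale (-1) (cd_mul k I I) = cd_real 1" by (simp add: cd_n_def conjI mul_scale)
  then have "cd_scale (-1) (cd_scale (-1) (cd_mul k I I)) = cd_scale (-1) (cd_real 1)" by simp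
  then show ?thesis by (simp add: cd_scale_def cd_real_def fun_eq_iff)
qed

lemma emb_mul: "cd_mul k (emb I u) (emb I v) = emb I (u * v)"
  unfolding emb_def
  by (simp add: mul_add mul_scale mul_real II) (simp add: cd_add_def cd_scale_def cd_real_def fun_eq_iff algebra_simps)

lemma emb_pow: "cd_pow k (emb I w) j = emb I (w ^ j)"
  by (induction j) (simp_all add: emb_mul, simp add: emb_def cd_add_def cd_scale_def cd_real_def fun_eq_iff)

lemma emb_conj: "cd_conj k (emb I w) = emb I (cnj w)"
  unfolding emb_def by (simp add: conj_add conj_scale conjI) (simp add: cd_add_def cd_scale_def fun_eq_iff)

lemma emb_abs: "cd_abs k (emb I w) = cmod w"
proof -
  have "cd_n k (emb I w) = emb I (cnj w * w)" by (simp add: cd_n_def emb_conj emb_mul)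
  then have "cd_n k (emb I w) 0 = Re (cnj w * w)" by (simp add: emb_apply I0 cd_real_def)
  also have "\<dots> = (cmod w)\<^sup>2" using cmod_power2[of w] by (simp add: power2_eq_square)
  finally show ?thesis by (simp add: cd_abs_def)
qed

lemma emb_sum: "(\<lambda>i. \<Sum>j\<in>S. emb I (f j) i) = emb I (\<Sum>j\<in>S. f j)"
  by (simp add: emb_apply fun_eq_iff Re_sum Im_sum sum.distrib sum_distrib_right)

lemma emb_zero_iff: "emb I w = Z \<longleftrightarrow> w = 0"
proof
  assume h: "emb I w = Z"
  have "emb I w 0 = 0" using h by simp
  then have "Re w = 0" by (simp add: emb_apply I0 cd_real_def)
  moreover have "Im w = 0"
  proof (rule ccontr)
    assume "Im w \<noteq> 0"
    then have "\<forall>i. I i = 0" using h \<open>Re w = 0\<close> by (auto simp: emb_apply fun_eq_iff)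
    then show False using Isq by simp
  qed
  ultimately show "w = 0" by (simp add: complex_eq_iff)
qed (simp add: emb_def cd_add_def cd_scale_def cd_real_def fun_eq_iff)

lemma emb_inj: "emb I u = emb I v \<longleftrightarrow> u = v"
proof
  assume "emb I u = emb I v"
  then have "emb I (u - v) = Z" by (auto simp: emb_apply fun_eq_iff algebra_simps dest!: fun_cong)
  then show "u = v" by (simp add: emb_zero_iff)
qed simp

lemma inner1: "cd_inner k c (cd_real 1) = c 0"
  by (simp add: cd_inner_def cd_real_def if_distrib cong: if_cong)

lemma proj_emb: "cd_proj k I c = emb I (Complex (c 0) (cd_inner k c I))"
  by (simp add: cd_proj_def emb_def inner1) (auto simp: cd_add_def cd_scale_def cd_real_def fun_eq_iff)

lemma CI_eq: "cd_CI k I = range (emb I)"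
proof
  show "cd_CI k I \<subseteq> range (emb I)"
  proof
    fix z assume "z \<in> cd_CI k I"
    then obtain x y where "z = cd_add (cd_real x) (cd_scale y I)" by (auto simp: cd_CI_def)
    then have "z = emb I (Complex x y)" by (simp add: emb_def)
    then show "z \<in> range (emb I)" by blast
  qed
  show "range (emb I) \<subseteq> cd_CI k I" unfolding cd_CI_def emb_def by blast
qed

lemma bessel:
  assumes "x \<in> cd_carrier k"
  shows "(x 0)\<^sup>2 + (cd_inner k x I)\<^sup>2 \<le> (cd_abs k x)\<^sup>2"
proof -
  let ?S = "{..<(2::nat)^k} - {0}"
  have fin: "finite ?S" by simp
  have 0: "(0::nat) \<in> {..<2^k}" by simp
  have "cd_inner k x I = (\<Sum>i\<in>?S. x i * I i)"
    unfolding cd_inner_def using sum.remove[OF _ 0, of "\<lambda>i. x i * I i"] by (simp add: I0)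
  moreover have "(\<Sum>i\<in>?S. (I i)\<^sup>2) = 1"
    using sum.remove[OF _ 0, of "\<lambda>i. (I i)\<^sup>2"] Isq by (simp add: I0)
  moreover have A: "(cd_abs k x)\<^sup>2 = (x 0)\<^sup>2 + (\<Sum>i\<in>?S. (x i)\<^sup>2)"
  proof -
    have "(cd_abs k x)\<^sup>2 = (\<Sum>i<2^k. (x i)\<^sup>2)"
      using assms by (simp add: cd_abs_def norm_formula cd_real_def sum_nonneg)
    then show ?thesis using sum.remove[OF _ 0, of "\<lambda>i. (x i)\<^sup>2"] by simp
  qed
  moreover have "(\<Sum>i\<in>?S. x i * I i)\<^sup>2 \<le> (\<Sum>i\<in>?S. (x i)\<^sup>2) * (\<Sum>i\<in>?S. (I i)\<^sup>2)"
    by (rule Cauchy_Schwarz_ineq_sum)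
  ultimately have "(cd_inner k x I)\<^sup>2 \<le> (\<Sum>i\<in>?S. (x i)\<^sup>2)" by simp
  with A show ?thesis by linarith
qed

end




lemma root_basic:
  fixes c :: "nat \<Rightarrow> complex" and A :: "nat \<Rightarrow> real"
  assumes cA: "\<And>j. j < n \<Longrightarrow> cmod (c j) \<le> A j"
    and root: "w ^ n + (\<Sum>j<n. c j * w ^ j) = 0"
  shows "cmod w ^ n \<le> (\<Sum>j<n. A j * cmod w ^ j)"
proof -
  have "w ^ n = - (\<Sum>j<n. c j * w ^ j)" using root by (simp add: eq_neg_iff_add_eq_0)
  then have "cmod (w ^ n) = cmod (\<Sum>j<n. c j * w ^ j)" by (metis norm_minus_cancel)
  then have "cmod w ^ n = cmod (\<Sum>j<n. c j * w ^ j)" by (simp add: norm_power)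
  also have "\<dots> \<le> (\<Sum>j<n. cmod (c j * w ^ j))" by (rule norm_sum)
  also have "\<dots> \<le> (\<Sum>j<n. A j * cmod w ^ j)"
    by (rule sum_mono) (simp add: norm_mult norm_power cA mult_right_mono)
  finally show ?thesis .
qed

lemma root_R2:
  fixes c :: "nat \<Rightarrow> complex" and A :: "nat \<Rightarrow> real"
  assumes n: "n \<ge> 1" and cA: "\<And>j. j < n \<Longrightarrow> cmod (c j) \<le> A j"
    and root: "w ^ n + (\<Sum>j<n. c j * w ^ j) = 0"
  shows "cmod w < 1 + Max (A ` {..<n})"
proof (rule ccontr)
  let ?r = "cmod w" and ?M = "Max (A ` {..<n})"
  assume "\<not> ?r < 1 + ?M"
  then have rM: "?M \<le> ?r - 1" by simp
  have AM: "A j \<le> ?M" if "j < n" for j using that by (simp add: Max_ge)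
  have "?r ^ n \<le> (\<Sum>j<n. A j * ?r ^ j)" by (rule root_basic[OF cA root])
  also have "\<dots> \<le> (\<Sum>j<n. (?r - 1) * ?r ^ j)"
    by (rule sum_mono) (metis AM rM lessThan_iff mult_right_mono norm_ge_zero order_trans zero_le_power)
  also have "\<dots> = ?r ^ n - 1" by (simp add: power_diff_1_eq sum_distrib_left)
  finally show False by simp
qed

lemma root_R3:
  fixes c :: "nat \<Rightarrow> complex" and A :: "nat \<Rightarrow> real"
  assumes n: "n \<ge> 1" and cA: "\<And>j. j < n \<Longrightarrow> cmod (c j) \<le> A j"
    and root: "w ^ n + (\<Sum>j<n. c j * w ^ j) = 0"
  shows "cmod w \<le> max 1 (\<Sum>j<n. A j)"
proof (rule ccontr)
  let ?r = "cmod w" and ?S = "(\<Sum>j<n. A j)"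
  assume "\<not> ?r \<le> max 1 ?S"
  then have r1: "?r > 1" and rS: "?r > ?S" by auto
  have A0: "0 \<le> A j" if "j < n" for j using cA[OF that] norm_ge_zero order_trans by blast
  have "?r ^ n \<le> (\<Sum>j<n. A j * ?r ^ j)" by (rule root_basic[OF cA root])
  also have "\<dots> \<le> (\<Sum>j<n. A j * ?r ^ (n - 1))"
    by (rule sum_mono) (use r1 A0 in \<open>auto intro!: mult_left_mono power_increasing\<close>)
  also have "\<dots> = ?S * ?r ^ (n - 1)" by (simp add: sum_distrib_right)
  also have "\<dots> < ?r * ?r ^ (n - 1)" proof (rule mult_strict_right_mono)
    show "0 < ?r ^ (n - 1)" by (rule zero_less_power) (use r1 in linarith)
  qed (use rS in simp)
  also have "\<dots> = ?r ^ n" using n by (metis Suc_diff_le diff_Suc_1 power_Suc)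
  finally show False by simp
qed

lemma root_R1:
  fixes c :: "nat \<Rightarrow> complex" and A :: "nat \<Rightarrow> real"
  assumes n: "n \<ge> 1" and cA: "\<And>j. j < n \<Longrightarrow> cmod (c j) \<le> A j"
    and root: "w ^ n + (\<Sum>j<n. c j * w ^ j) = 0"
  shows "cmod w < sqrt (1 + (\<Sum>j<n. (A j)\<^sup>2))"
proof (rule ccontr)
  let ?r = "cmod w" and ?T = "(\<Sum>j<n. (A j)\<^sup>2)"
  let ?q = "?r\<^sup>2"
  assume "\<not> ?r < sqrt (1 + ?T)"
  then have "sqrt (1 + ?T) \<le> ?r" by simp
  then have "(sqrt (1 + ?T))\<^sup>2 \<le> ?q" by (rule power_mono) (simp add: sum_nonneg)
  then have Tq: "?T \<le> ?q - 1" by (simp add: sum_nonneg)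
  have A0: "0 \<le> A j" if "j < n" for j using cA[OF that] norm_ge_zero order_trans by blast
  have "?r ^ n \<le> (\<Sum>j<n. A j * ?r ^ j)" by (rule root_basic[OF cA root])
  then have "(?r ^ n)\<^sup>2 \<le> (\<Sum>j<n. A j * ?r ^ j)\<^sup>2" by (rule power_mono) simp
  also have "\<dots> \<le> ?T * (\<Sum>j<n. (?r ^ j)\<^sup>2)" by (rule Cauchy_Schwarz_ineq_sum)
  also have "(\<Sum>j<n. (?r ^ j)\<^sup>2) = (\<Sum>j<n. ?q ^ j)" by (simp add: power_mult[symmetric] mult.commute)
  also have "?T * (\<Sum>j<n. ?q ^ j) \<le> (?q - 1) * (\<Sum>j<n. ?q ^ j)"
    using Tq by (intro mult_right_mono) (auto intro: sum_nonneg)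
  also have "\<dots> = ?q ^ n - 1" by (simp add: power_diff_1_eq)
  also have "?q ^ n = (?r ^ n)\<^sup>2" by (simp add: power_mult[symmetric] mult.commute)
  finally show False by simp
qed




definition CC :: "nat \<Rightarrow> (nat \<Rightarrow> real) \<Rightarrow> (nat \<Rightarrow> (nat \<Rightarrow> real)) \<Rightarrow> nat \<Rightarrow> nat \<Rightarrow> complex" where
  "CC k I a n j = Complex (monic_coeffs a n j 0) (cd_inner k (monic_coeffs a n j) I)"

definition Roots :: "nat \<Rightarrow> (nat \<Rightarrow> real) \<Rightarrow> (nat \<Rightarrow> (nat \<Rightarrow> real)) \<Rightarrow> nat \<Rightarrow> complex set" where
  "Roots k I a n = {w. (\<Sum>j\<le>n. CC k I a n j * w ^ j) = 0}"

lemma emb_scaleR: "emb I (of_real r * w) i = r * emb I w i"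
  by (simp add: emb_apply algebra_simps)

context unitI begin

lemma CC_n: "CC k I a n n = 1"
proof -
  have "cd_inner k (cd_real 1) I = (\<Sum>i<2^k. if i = 0 then I i else 0)"
    unfolding cd_inner_def by (rule sum.cong) (auto simp: cd_real_def)
  then have "cd_inner k (cd_real 1) I = I 0" by simp
  then show ?thesis by (simp add: CC_def monic_coeffs_def I0 cd_real_def complex_eq_iff)
qed

lemma CC_lt: "j < n \<Longrightarrow> CC k I a n j = Complex (a j 0) (cd_inner k (a j) I)"
  by (simp add: CC_def monic_coeffs_def)

lemma CC_bound: "j < n \<Longrightarrow> a j \<in> cd_carrier k \<Longrightarrow> cmod (CC k I a n j) \<le> cd_abs k (a j)"
proof -
  assume j: "j < n" and c: "a j \<in> cd_carrier k"
  have "(cmod (CC k I a n j))\<^sup>2 \<le> (cd_abs k (a j))\<^sup>2"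
    using bessel[OF c] by (simp add: CC_lt[OF j] cmod_power2)
  moreover have "cd_abs k (a j) \<ge> 0" by (simp add: cd_abs_def norm_formula[OF c] cd_real_def sum_nonneg)
  ultimately show ?thesis using power2_le_imp_le by blast
qed

lemma Roots_eq: "w \<in> Roots k I a n \<longleftrightarrow> w ^ n + (\<Sum>j<n. CC k I a n j * w ^ j) = 0"
  by (simp add: Roots_def lessThan_Suc_atMost[symmetric] CC_n add.commute)

lemma K_eq: assumes "n \<ge> 1" shows "K_CI k I (monic_coeffs a n) n = cd_convex_hull (emb I ` Roots k I a n)"
proof -
  let ?cI = "\<lambda>j. cd_proj k I (monic_coeffs a n j)"
  have cI: "?cI j = emb I (CC k I a n j)" for j by (simp add: proj_emb CC_def)
  have "?cI n \<noteq> Z" by (simp add: cI CC_n emb_zero_iff)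
  then have ex: "\<exists>j\<in>{1..n}. ?cI j \<noteq> Z"
    using \<open>n \<ge> 1\<close> by (auto intro: bexI[of _ n])
  have ev: "cd_poly_eval k ?cI n (emb I w) = emb I (\<Sum>j\<le>n. CC k I a n j * w ^ j)" for w
    by (simp add: cd_poly_eval_def cI emb_pow emb_mul emb_sum)
  have "{z \<in> cd_CI k I. cd_poly_eval k ?cI n z = Z} = emb I ` Roots k I a n"
    by (auto simp: CI_eq ev emb_zero_iff Roots_def)
  then show ?thesis using ex by (simp add: K_CI_def Let_def)
qed

lemma hull_emb:
  assumes "z \<in> cd_convex_hull (emb I ` W)"
  shows "\<exists>F t. finite F \<and> F \<subseteq> W \<and> F \<noteq> {} \<and> (\<forall>w\<in>F. 0 \<le> t w) \<and> (\<Sum>w\<in>F. t w) = 1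
            \<and> z = emb I (\<Sum>w\<in>F. of_real (t w) * w)"
proof -
  obtain F' t where z: "z = (\<lambda>i. \<Sum>s\<in>F'. t s * s i)" and fin: "finite F'" and sub: "F' \<subseteq> emb I ` W"
    and ne: "F' \<noteq> {}" and t0: "\<forall>s\<in>F'. 0 \<le> t s" and t1: "(\<Sum>s\<in>F'. t s) = 1"
    using assms unfolding cd_convex_hull_def by blast
  define F where "F = {w \<in> W. emb I w \<in> F'}"
  have inj: "inj_on (emb I) F" by (auto simp: inj_on_def emb_inj)
  have img: "emb I ` F = F'" using sub by (auto simp: F_def)
  have finF: "finite F" using fin img inj by (metis finite_imageD)
  have neF: "F \<noteq> {}" using ne img by auto
  have sumr: "(\<Sum>s\<in>F'. g s) = (\<Sum>w\<in>F. g (emb I w))" for g :: "_ \<Rightarrow> real"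
    using sum.reindex[OF inj, of g] img by simp
  have A: "finite F" "F \<subseteq> W" "F \<noteq> {}" using finF neF by (auto simp: F_def)
  have B: "\<forall>w\<in>F. 0 \<le> (t \<circ> emb I) w" using t0 by (auto simp: F_def)
  have C: "(\<Sum>w\<in>F. (t \<circ> emb I) w) = 1" using t1 sumr by simp
  have "z = (\<lambda>i. \<Sum>w\<in>F. emb I (of_real ((t \<circ> emb I) w) * w) i)"
    unfolding z by (simp add: sumr emb_scaleR)
  then have D: "z = emb I (\<Sum>w\<in>F. of_real ((t \<circ> emb I) w) * w)" by (simp add: emb_sum)
  show ?thesis
    apply (rule exI[of _ F], rule exI[of _ "t \<circ> emb I"])
    using A B C D by blast
qed

end

lemma convex_cmod_lt:
  assumes "finite F" "F \<noteq> {}" "\<forall>w\<in>F. 0 \<le> t w" "(\<Sum>w\<in>F. t w) = 1" "\<forall>w\<in>F. cmod w < R"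
  shows "cmod (\<Sum>w\<in>F. of_real (t w) * w) < R"
proof -
  let ?M = "Max (cmod ` F)"
  have M: "?M < R" using assms by simp
  have "cmod (\<Sum>w\<in>F. of_real (t w) * w) \<le> (\<Sum>w\<in>F. t w * cmod w)"
    using assms(3) by (auto intro!: order.trans[OF norm_sum] sum_mono simp: norm_mult)
  also have "\<dots> \<le> (\<Sum>w\<in>F. t w * ?M)"
    using assms by (intro sum_mono mult_left_mono) auto
  also have "\<dots> = ?M" using assms(4) by (simp add: sum_distrib_right[symmetric])
  finally show ?thesis using M by simp
qed

lemma convex_cmod_le:
  assumes "finite F" "F \<noteq> {}" "\<forall>w\<in>F. 0 \<le> t w" "(\<Sum>w\<in>F. t w) = 1" "\<forall>w\<in>F. cmod w \<le> R"
  shows "cmod (\<Sum>w\<in>F. of_real (t w) * w) \<le> R"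
proof -
  have "cmod (\<Sum>w\<in>F. of_real (t w) * w) \<le> (\<Sum>w\<in>F. t w * cmod w)"
    using assms(3) by (auto intro!: order.trans[OF norm_sum] sum_mono simp: norm_mult)
  also have "\<dots> \<le> (\<Sum>w\<in>F. t w * R)"
    using assms by (intro sum_mono mult_left_mono) auto
  also have "\<dots> = R" using assms(4) by (simp add: sum_distrib_right[symmetric])
  finally show ?thesis .
qed





lemma snail_lt:
  assumes n: "n \<ge> 1" and z: "z \<in> snail k (monic_coeffs a n) n"
    and H: "\<And>I w. I \<in> cd_units k \<Longrightarrow> w \<in> Roots k I a n \<Longrightarrow> cmod w < R"
  shows "z \<in> cd_carrier k \<and> cd_abs k z < R"
proof -
  obtain I where I: "I \<in> cd_units k" and zK: "z \<in> K_CI k I (monic_coeffs a n) n"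
    using z by (auto simp: snail_def)
  interpret unitI k I using I by unfold_locales
  obtain F t where F: "finite F" "F \<subseteq> Roots k I a n" "F \<noteq> {}" "\<forall>w\<in>F. 0 \<le> t w" "(\<Sum>w\<in>F. t w) = 1"
    and zv: "z = emb I (\<Sum>w\<in>F. of_real (t w) * w)"
    using hull_emb[of z "Roots k I a n"] zK K_eq[OF n] by auto
  have "cmod (\<Sum>w\<in>F. of_real (t w) * w) < R"
    using F H[OF I] by (intro convex_cmod_lt) auto
  then show ?thesis using zv by (simp add: emb_abs)
qed

lemma snail_le:
  assumes n: "n \<ge> 1" and z: "z \<in> snail k (monic_coeffs a n) n"
    and H: "\<And>I w. I \<in> cd_units k \<Longrightarrow> w \<in> Roots k I a n \<Longrightarrow> cmod w \<le> R"
  shows "z \<in> cd_carrier k \<and> cd_abs k z \<le> R"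
proof -
  obtain I where I: "I \<in> cd_units k" and zK: "z \<in> K_CI k I (monic_coeffs a n) n"
    using z by (auto simp: snail_def)
  interpret unitI k I using I by unfold_locales
  obtain F t where F: "finite F" "F \<subseteq> Roots k I a n" "F \<noteq> {}" "\<forall>w\<in>F. 0 \<le> t w" "(\<Sum>w\<in>F. t w) = 1"
    and zv: "z = emb I (\<Sum>w\<in>F. of_real (t w) * w)"
    using hull_emb[of z "Roots k I a n"] zK K_eq[OF n] by auto
  have "cmod (\<Sum>w\<in>F. of_real (t w) * w) \<le> R"
    using F H[OF I] by (intro convex_cmod_le) auto
  then show ?thesis using zv by (simp add: emb_abs)
qed

lemma root_facts:
  assumes n: "n \<ge> 1" and car: "\<forall>j<n. a j \<in> cd_carrier k"
    and I: "I \<in> cd_units k" and w: "w \<in> Roots k I a n"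
  shows "cmod w < sqrt (1 + (\<Sum>j<n. (cd_abs k (a j))\<^sup>2))"
    "cmod w < 1 + Max ((\<lambda>j. cd_abs k (a j)) ` {..<n})"
    "cmod w \<le> max 1 (\<Sum>j<n. cd_abs k (a j))"
proof -
  interpret unitI k I using I by unfold_locales
  have e: "w ^ n + (\<Sum>j<n. CC k I a n j * w ^ j) = 0" using w Roots_eq by simp
  have b: "\<And>j. j < n \<Longrightarrow> cmod (CC k I a n j) \<le> cd_abs k (a j)" using CC_bound car by blast
  show "cmod w < sqrt (1 + (\<Sum>j<n. (cd_abs k (a j))\<^sup>2))" by (rule root_R1[OF n b e])
  show "cmod w < 1 + Max ((\<lambda>j. cd_abs k (a j)) ` {..<n})" by (rule root_R2[OF n b e])
  show "cmod w \<le> max 1 (\<Sum>j<n. cd_abs k (a j))" by (rule root_R3[OF n b e])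
qed




type_synonym param = "(nat \<Rightarrow> real) \<times> (nat \<Rightarrow> real) \<times> (nat \<Rightarrow> real) \<times> (nat \<Rightarrow> real)"

lemma cont_app: "continuous_on S f \<Longrightarrow> continuous_on S (\<lambda>x. f x i :: real)"
  by (rule continuous_on_product_then_coordinatewise)

lemma cont_params [continuous_intros]:
  "continuous_on S (\<lambda>p::param. fst p i)"
  "continuous_on S (\<lambda>p::param. fst (snd p) i)"
  "continuous_on S (\<lambda>p::param. fst (snd (snd p)) i)"
  "continuous_on S (\<lambda>p::param. snd (snd (snd p)) i)"
  by (rule cont_app, intro continuous_intros)+

lemma compact_box: "compact (Pi UNIV (\<lambda>_::nat. {-R..R::real}))"
proof -
  have "compactin (product_topology (\<lambda>_. euclidean) UNIV) (PiE UNIV (\<lambda>_::nat. {-R..R::real}))"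
    by (simp add: compactin_PiE)
  then show ?thesis by (simp add: euclidean_product_topology PiE_UNIV_domain)
qed

lemma sum_if_lt: "m \<le> n \<Longrightarrow> (\<Sum>j<n. if j < m then f j else 0) = (\<Sum>j<m. f j)"
  for f :: "nat \<Rightarrow> 'b::comm_monoid_add"
  by (induction n) (auto simp: less_Suc_eq_le le_Suc_eq)

lemma units_of:
  assumes "I \<in> cd_carrier k" "I 0 = 0" "(\<Sum>i<2^k. (I i)\<^sup>2) = 1"
  shows "I \<in> cd_units k"
proof -
  have "cd_tr k I = cd_real 0"
    using assms by (auto simp: cd_tr_def cd_add_def conj_formula cd_real_def fun_eq_iff)
  moreover have "cd_n k I = cd_real 1" using assms by (simp add: norm_formula)
  ultimately show ?thesis using assms by (simp add: cd_units_def)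
qed

definition Icoord :: "nat \<Rightarrow> param \<Rightarrow> nat \<Rightarrow> real" where
  "Icoord k p = (\<lambda>i. if i < 2^k then fst p i else 0)"
definition Wc :: "param \<Rightarrow> nat \<Rightarrow> complex" where
  "Wc p j = of_real (fst (snd p) j) + \<i> * of_real (fst (snd (snd p)) j)"
definition Tw :: "param \<Rightarrow> nat \<Rightarrow> real" where
  "Tw p j = snd (snd (snd p)) j"
definition CCp :: "nat \<Rightarrow> (nat \<Rightarrow> (nat \<Rightarrow> real)) \<Rightarrow> nat \<Rightarrow> param \<Rightarrow> nat \<Rightarrow> complex" where
  "CCp k a n p l = of_real (monic_coeffs a n l 0) + \<i> * of_real (\<Sum>i<2^k. monic_coeffs a n l i * fst p i)"
definition Phi :: "nat \<Rightarrow> nat \<Rightarrow> param \<Rightarrow> nat \<Rightarrow> real" where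
  "Phi k n p = (\<lambda>i. (\<Sum>j<n. Tw p j * fst (snd p) j) * cd_real 1 i
                 + (\<Sum>j<n. Tw p j * fst (snd (snd p)) j) * Icoord k p i)"

lemma Icoord_carrier: "Icoord k p \<in> cd_carrier k" by (simp add: Icoord_def cd_carrier_def)

lemma Phi_emb: "Phi k n p = emb (Icoord k p) (\<Sum>j<n. of_real (Tw p j) * Wc p j)"
  by (simp add: Phi_def emb_apply fun_eq_iff Re_sum Im_sum Wc_def)

lemma CCp_eq: "CCp k a n p l = CC k (Icoord k p) a n l"
proof -
  have "cd_inner k (monic_coeffs a n l) (Icoord k p) = (\<Sum>i<2^k. monic_coeffs a n l i * fst p i)"
    unfolding cd_inner_def by (rule sum.cong) (auto simp: Icoord_def)
  then show ?thesis by (simp add: CCp_def CC_def complex_eq_iff)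
qed

lemma cont_Icoord: "continuous_on S (\<lambda>p. Icoord k p i)"
  by (cases "i < 2^k") (simp_all add: Icoord_def continuous_intros)

lemma cont_Phi: "continuous_on S (Phi k n)"
  unfolding Phi_def Tw_def
  by (intro continuous_on_coordinatewise_then_product continuous_intros cont_Icoord)

lemma closed_roots: "closed {p. (\<Sum>l\<le>n. CCp k a n p l * Wc p j ^ l) = 0}"
  unfolding CCp_def Wc_def
  by (intro closed_Collect_eq continuous_intros)

lemma closed_rest:
  "closed {p::param. fst p 0 = 0}"
  "closed {p::param. (\<Sum>i<2^k. (fst p i)\<^sup>2) = 1}"
  "closed {p. 0 \<le> Tw p j}"
  "closed {p. (\<Sum>j<n. Tw p j) = 1}"
  unfolding Tw_def
  by (intro closed_Collect_eq closed_Collect_le continuous_intros)+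




locale snctx =
  fixes k n :: nat and a :: "nat \<Rightarrow> (nat \<Rightarrow> real)"
  assumes n: "n \<ge> 1" and car: "\<forall>j<n. a j \<in> cd_carrier k"
begin

definition RR :: real where "RR = max 1 (1 + Max ((\<lambda>j. cd_abs k (a j)) ` {..<n}))"

definition Box :: "param set" where
  "Box = Pi UNIV (\<lambda>_. {-RR..RR}) \<times> Pi UNIV (\<lambda>_. {-RR..RR}) \<times> Pi UNIV (\<lambda>_. {-RR..RR}) \<times> Pi UNIV (\<lambda>_. {-RR..RR})"

definition PP :: "param set" where
  "PP = Box \<inter> ({p. fst p 0 = 0} \<inter> {p. (\<Sum>i<2^k. (fst p i)\<^sup>2) = 1}
        \<inter> (\<Inter>j\<in>{..<n}. {p. (\<Sum>l\<le>n. CCp k a n p l * Wc p j ^ l) = 0})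
        \<inter> (\<Inter>j\<in>{..<n}. {p. 0 \<le> Tw p j}) \<inter> {p. (\<Sum>j<n. Tw p j) = 1})"

lemma compact_PP: "compact PP"
proof -
  have "compact Box" unfolding Box_def by (intro compact_Times compact_box)
  moreover have "closed ({p. fst p 0 = 0} \<inter> {p. (\<Sum>i<2^k. (fst p i)\<^sup>2) = 1}
        \<inter> (\<Inter>j\<in>{..<n}. {p. (\<Sum>l\<le>n. CCp k a n p l * Wc p j ^ l) = 0})
        \<inter> (\<Inter>j\<in>{..<n}. {p. 0 \<le> Tw p j}) \<inter> {p. (\<Sum>j<n. Tw p j) = 1})"
    by (intro closed_Int closed_INT ballI closed_roots closed_rest)
  ultimately show ?thesis unfolding PP_def by (rule compact_Int_closed)
qed

lemma image_sub: "Phi k n ` PP \<subseteq> snail k (monic_coeffs a n) n"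
proof
  fix z assume "z \<in> Phi k n ` PP"
  then obtain p where p: "p \<in> PP" and z: "z = Phi k n p" by blast
  let ?I = "Icoord k p"
  have I0: "?I 0 = 0" using p by (simp add: PP_def Icoord_def)
  have "(\<Sum>i<2^k. (?I i)\<^sup>2) = 1" using p by (simp add: PP_def Icoord_def)
  then have I: "?I \<in> cd_units k" using units_of[OF Icoord_carrier I0] by simp
  interpret unitI k ?I using I by unfold_locales
  let ?e = "\<lambda>j. emb ?I (Wc p j)"
  let ?F = "?e ` {..<n}"
  let ?t = "\<lambda>s. \<Sum>j\<in>{j\<in>{..<n}. ?e j = s}. Tw p j"
  have roots: "Wc p j \<in> Roots k ?I a n" if "j < n" for j
    using p that by (auto simp: PP_def Roots_def CCp_eq)
  have T0: "0 \<le> Tw p j" if "j < n" for j using p that by (auto simp: PP_def)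
  have T1: "(\<Sum>j<n. Tw p j) = 1" using p by (simp add: PP_def)
  have "z = (\<lambda>i. \<Sum>s\<in>?F. ?t s * s i)"
  proof
    fix i
    have "(\<Sum>s\<in>?F. ?t s * s i) = (\<Sum>s\<in>?F. \<Sum>j\<in>{j\<in>{..<n}. ?e j = s}. Tw p j * ?e j i)"
      by (rule sum.cong) (auto simp: sum_distrib_right)
    also have "\<dots> = (\<Sum>j<n. Tw p j * ?e j i)"
      by (rule sum.image_gen[symmetric]) simp
    also have "\<dots> = (\<Sum>j<n. emb ?I (of_real (Tw p j) * Wc p j) i)" by (simp add: emb_scaleR)
    also have "\<dots> = emb ?I (\<Sum>j<n. of_real (Tw p j) * Wc p j) i"
      using fun_cong[OF emb_sum[where f="\<lambda>j. of_real (Tw p j) * Wc p j" and S="{..<n}"], of i] by simp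
    also have "\<dots> = z i" using z Phi_emb by simp
    finally show "z i = (\<Sum>s\<in>?F. ?t s * s i)" by simp
  qed
  moreover have "(\<Sum>s\<in>?F. ?t s) = 1"
    using T1 sum.image_gen[of "{..<n}" "Tw p" ?e] by simp
  moreover have "\<forall>s\<in>?F. 0 \<le> ?t s" using T0 by (auto intro!: sum_nonneg)
  moreover have "?F \<subseteq> emb ?I ` Roots k ?I a n" using roots by auto
  moreover have "?F \<noteq> {}" using n by (metis empty_iff image_is_empty lessThan_iff less_le_trans zero_less_one)
  ultimately have "z \<in> cd_convex_hull (emb ?I ` Roots k ?I a n)"
    unfolding cd_convex_hull_def
    apply (intro CollectI exI[of _ ?F] exI[of _ ?t] conjI)
    by simp_all
  then have "z \<in> K_CI k ?I (monic_coeffs a n) n" using K_eq[OF n] by simp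
  then show "z \<in> snail k (monic_coeffs a n) n" using I by (auto simp: snail_def)
qed

lemma snail_sub: "snail k (monic_coeffs a n) n \<subseteq> Phi k n ` PP"
proof
  fix z assume z: "z \<in> snail k (monic_coeffs a n) n"
  obtain I where I: "I \<in> cd_units k" and zK: "z \<in> K_CI k I (monic_coeffs a n) n"
    using z by (auto simp: snail_def)
  interpret unitI k I using I by unfold_locales
  obtain F t where F: "finite F" "F \<subseteq> Roots k I a n" "F \<noteq> {}" and t0: "\<forall>w\<in>F. 0 \<le> t w"
    and t1: "(\<Sum>w\<in>F. t w) = 1"
    and zv: "z = emb I (\<Sum>w\<in>F. of_real (t w) * w)"
    using hull_emb[of z "Roots k I a n"] zK K_eq[OF n] by auto
  have "\<exists>j. j \<le> n \<and> CC k I a n j \<noteq> 0" using CC_n by auto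
  then have cardR: "card (Roots k I a n) \<le> n" and finR: "finite (Roots k I a n)"
    using polyfun_rootbound[of n "CC k I a n"] by (simp_all add: Roots_def)
  define m where "m = card F"
  have m1: "0 < m" using F by (simp add: m_def card_gt_0_iff)
  have mn: "m \<le> n" using card_mono[OF finR F(2)] cardR by (simp add: m_def)
  obtain h where h: "bij_betw h {0..<m} F" using ex_bij_betw_nat_finite[OF F(1)] m_def by blast
  have hF: "h j \<in> F" if "j < m" for j using h that by (auto simp: bij_betw_def)
  define wj where "wj j = (if j < m then h j else h 0)" for j
  have wjF: "wj j \<in> F" for j using hF m1 by (simp add: wj_def)
  have wjR: "wj j \<in> Roots k I a n" for j using wjF F(2) by blast
  define p :: param where "p = (I, \<lambda>j. if j < n then Re (wj j) else 0,
      \<lambda>j. if j < n then Im (wj j) else 0, \<lambda>j. if j < m then t (h j) else 0)"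
  have Ic: "Icoord k p = I"
    using carrier by (auto simp: Icoord_def p_def fun_eq_iff cd_carrier_def)
  have RR1: "1 \<le> RR" by (simp add: RR_def)
  have rootRR: "cmod w \<le> RR" if "w \<in> Roots k I a n" for w
    using root_facts(2)[OF n car I that] by (simp add: RR_def)
  have Ib: "\<bar>I i\<bar> \<le> 1" for i
  proof (cases "i < 2^k")
    case True
    have "(I i)\<^sup>2 \<le> (\<Sum>i<2^k. (I i)\<^sup>2)"
      by (rule member_le_sum) (use True in auto)
    then show ?thesis using Isq by (simp add: abs_square_le_1)
  next
    case False then show ?thesis using carrier by (simp add: cd_carrier_def)
  qed
  have tb: "t w \<le> 1" if "w \<in> F" for w
    using member_le_sum[of w F t] that t0 t1 F(1) by simp
  have "p \<in> Box"
  proof -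
    have r: "\<bar>Re (wj j)\<bar> \<le> RR" "\<bar>Im (wj j)\<bar> \<le> RR" for j
      using rootRR[OF wjR[of j]] abs_Re_le_cmod abs_Im_le_cmod order_trans by blast+
    have b1: "-RR \<le> Re (wj j)" "Re (wj j) \<le> RR" "-RR \<le> Im (wj j)" "Im (wj j) \<le> RR" for j
      using r[of j] by linarith+
    have b2: "-RR \<le> t (h j)" "t (h j) \<le> RR" if "j < m" for j
      using tb[OF hF[OF that]] t0 hF[OF that] RR1 by auto
    have b3: "-RR \<le> I i" "I i \<le> RR" for i
      using Ib[of i] RR1 by linarith+
    show ?thesis using RR1
      by (auto simp: Box_def p_def b1 b2 b3)
  qed
  moreover have "fst p 0 = 0" using I0 by (simp add: p_def)
  moreover have "(\<Sum>i<2^k. (fst p i)\<^sup>2) = 1" using Isq by (simp add: p_def)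
  moreover have "(\<Sum>l\<le>n. CCp k a n p l * Wc p j ^ l) = 0" if "j < n" for j
  proof -
    have "Wc p j = wj j" using that by (simp add: Wc_def p_def complex_eq_iff)
    then show ?thesis using wjR[of j] by (simp add: CCp_eq Ic Roots_def)
  qed
  moreover have "0 \<le> Tw p j" for j using t0 hF by (simp add: Tw_def p_def)
  moreover have sT: "(\<Sum>j<n. Tw p j) = 1"
  proof -
    have "(\<Sum>j<n. Tw p j) = (\<Sum>j<m. t (h j))"
      using sum_if_lt[OF mn, of "\<lambda>j. t (h j)"] by (simp add: Tw_def p_def)
    also have "\<dots> = (\<Sum>w\<in>F. t w)"
      using sum.reindex_bij_betw[OF h, of t] by (simp add: atLeast0LessThan)
    finally show ?thesis using t1 by simp
  qed
  ultimately have pP: "p \<in> PP" by (simp add: PP_def)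
  have "(\<Sum>j<n. of_real (Tw p j) * Wc p j) = (\<Sum>j<n. if j < m then of_real (t (h j)) * h j else 0)"
  proof (rule sum.cong)
    fix j assume "j \<in> {..<n}"
    then show "of_real (Tw p j) * Wc p j = (if j < m then of_real (t (h j)) * h j else 0)"
      by (simp add: Tw_def Wc_def p_def wj_def complex_eq_iff)
  qed simp
  also have "\<dots> = (\<Sum>j<m. of_real (t (h j)) * h j)" by (rule sum_if_lt[OF mn])
  also have "\<dots> = (\<Sum>w\<in>F. of_real (t w) * w)"
    using sum.reindex_bij_betw[OF h, of "\<lambda>w. of_real (t w) * w"] by (simp add: atLeast0LessThan)
  finally have "Phi k n p = z" using zv by (simp add: Phi_emb Ic)
  then show "z \<in> Phi k n ` PP" using pP by blast
qed

end



theorem theorem4p10: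
  fixes k n :: nat and a :: "nat \<Rightarrow> (nat \<Rightarrow> real)"
  assumes "n \<ge> 1"
    and "\<forall>j<n. a j \<in> cd_carrier k"
  shows "compact (snail k (monic_coeffs a n) n)
    \<and> snail k (monic_coeffs a n) n
        \<subseteq> {z \<in> cd_carrier k. cd_abs k z < sqrt (1 + (\<Sum>j<n. (cd_abs k (a j))\<^sup>2))}
    \<and> snail k (monic_coeffs a n) n
        \<subseteq> {z \<in> cd_carrier k. cd_abs k z < 1 + Max ((\<lambda>j. cd_abs k (a j)) ` {..<n})}
    \<and> snail k (monic_coeffs a n) n
        \<subseteq> {z \<in> cd_carrier k. cd_abs k z \<le> max 1 (\<Sum>j<n. cd_abs k (a j))}"
proof -
  interpret snctx k n a using assms by unfold_locales
  have eq: "snail k (monic_coeffs a n) n = Phi k n ` PP" using image_sub snail_sub by blast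
  have c: "compact (snail k (monic_coeffs a n) n)"
    unfolding eq by (rule compact_continuous_image[OF cont_Phi compact_PP])
  have b1: "snail k (monic_coeffs a n) n
        \<subseteq> {z \<in> cd_carrier k. cd_abs k z < sqrt (1 + (\<Sum>j<n. (cd_abs k (a j))\<^sup>2))}"
  proof
    fix z assume "z \<in> snail k (monic_coeffs a n) n"
    from snail_lt[OF assms(1) this root_facts(1)[OF assms(1) assms(2)]]
    show "z \<in> {z \<in> cd_carrier k. cd_abs k z < sqrt (1 + (\<Sum>j<n. (cd_abs k (a j))\<^sup>2))}" by simp
  qed
  have b2: "snail k (monic_coeffs a n) n
        \<subseteq> {z \<in> cd_carrier k. cd_abs k z < 1 + Max ((\<lambda>j. cd_abs k (a j)) ` {..<n})}"
  proof
    fix z assume "z \<in> snail k (monic_coeffs a n) n"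
    from snail_lt[OF assms(1) this root_facts(2)[OF assms(1) assms(2)]]
    show "z \<in> {z \<in> cd_carrier k. cd_abs k z < 1 + Max ((\<lambda>j. cd_abs k (a j)) ` {..<n})}" by simp
  qed
  have b3: "snail k (monic_coeffs a n) n
        \<subseteq> {z \<in> cd_carrier k. cd_abs k z \<le> max 1 (\<Sum>j<n. cd_abs k (a j))}"
  proof
    fix z assume "z \<in> snail k (monic_coeffs a n) n"
    from snail_le[OF assms(1) this root_facts(3)[OF assms(1) assms(2)]]
    show "z \<in> {z \<in> cd_carrier k. cd_abs k z \<le> max 1 (\<Sum>j<n. cd_abs k (a j))}" by simp
  qed
  show ?thesis using c b1 b2 b3 by blast
qed

end
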